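(* Let $d_1\ge2$, let $\sigma_X,\sigma_Y\in\mathbb R^{d_1}$ be linearly independent, $k_0>0$, $k_1\in\mathbb R$, $b\in\mathbb R$ with $b\ne k_1/k_0$, $z\in\mathbb R\setminus\{0\}$, $\bar r_X\ge0$, and $[\underline c,\bar c]\subseteq[0,1]$. Then $$\inf\{\underline r_Y(z,c,b):p(z,c;\bar r_X)\ge0,\ c\in\mathbb R^{d_1},\ \|c\|\in[\underline c,\bar c],\ \|c\|<1\}$$ $$=\inf\{\underline r_Y(z,c,b):p(z,c;\bar r_X)\ge0,\ c\in\operatorname{span}\{\sigma_X,\sigma_Y\},\ \|c\|\in[\underline c,\bar c],\ \|c\|<1\}.$$
   Context: $\|\cdot\|$ Euclidean norm. $p(z,c;\bar r_X)=\bar r_X^2\|\sigma_X\sqrt{1-\|c\|^2}-zc\|^2-z^2$. For $\|c\|<1$, let $v(z,c,b)=z\sqrt{1-\|c\|^2}(\sigma_Y-b\sigma_X)-(k_1-bk_0)c$, and $\underline r_Y(z,c,b)=|k_1-bk_0|/\|v(z,c,b)\|$ if $v(z,c,b)\ne0$, $\underline r_Y(z,c,b)=+\infty$ if $v(z,c,b)=0$. (In the application, $\sigma_X=\operatorname{cov}(W_1,X)$, $\sigma_Y=\operatorname{cov}(W_1,Y)$, $k_0=\operatorname{var}(X^{\perp W_1})$, $k_1=\operatorname{cov}(Y^{\perp W_1},X^{\perp W_1})$.) *)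

theory Defs
  imports "HOL-Analysis.Analysis" "HOL-Library.Extended_Real"
begin

definition p_fun :: "real ^ 'd \<Rightarrow> real \<Rightarrow> real ^ 'd \<Rightarrow> real \<Rightarrow> real" where
  "p_fun sX z c rX = rX^2 * (norm (sqrt (1 - (norm c)^2) *\<^sub>R sX - z *\<^sub>R c))^2 - z^2"

definition v_fun :: "real ^ 'd \<Rightarrow> real ^ 'd \<Rightarrow> real \<Rightarrow> real \<Rightarrow> real \<Rightarrow> real ^ 'd \<Rightarrow> real \<Rightarrow> real ^ 'd" where
  "v_fun sX sY k0 k1 z c b =
     (z * sqrt (1 - (norm c)^2)) *\<^sub>R (sY - b *\<^sub>R sX) - (k1 - b * k0) *\<^sub>R c"

definition rY_lower :: "real ^ 'd \<Rightarrow> real ^ 'd \<Rightarrow> real \<Rightarrow> real \<Rightarrow> real \<Rightarrow> real ^ 'd \<Rightarrow> real \<Rightarrow> ereal" where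
  "rY_lower sX sY k0 k1 z c b =
     (if v_fun sX sY k0 k1 z c b = 0 then \<infinity>
      else ereal (\<bar>k1 - b * k0\<bar> / norm (v_fun sX sY k0 k1 z c b)))"

end

theory Submission
  imports Defs
begin


lemma key_step:
  fixes sX sY c :: "real ^ 'd" and \<kappa> :: real
  assumes ind: "independent {sX, sY}" and ne: "sX \<noteq> sY"
  shows "\<exists>c'\<in>span {sX, sY}. norm c' = norm c \<and> inner sX c' = inner sX c \<and>
           \<kappa> * (inner sY c' - inner sY c) \<le> 0"
proof -
  have sX0: "sX \<noteq> 0" using ind dependent_zero by blast
  define \<mu> where "\<mu> = inner sY sX / inner sX sX"
  define d where "d = sY - \<mu> *\<^sub>R sX"
  have ssX: "inner sX sX > 0" using sX0 by simp
  have dX: "inner d sX = 0" using ssX by (simp add: d_def \<mu>_def inner_diff_left)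
  have d0: "d \<noteq> 0"
  proof
    assume "d = 0"
    then have "sY = \<mu> *\<^sub>R sX" by (simp add: d_def)
    then have "sY \<in> span ({sX, sY} - {sY})" using ne by (simp add: span_base span_scale)
    then show False using ind dependent_def by blast
  qed
  have dd: "inner d d > 0" using d0 by simp
  have dspan: "d \<in> span {sX, sY}" unfolding d_def
    by (simp add: span_base span_diff span_scale)
  have sYd: "inner sY d = inner d d"
    using dX by (simp add: d_def inner_diff_left inner_diff_right inner_commute)
  define cP where "cP = (inner c sX / inner sX sX) *\<^sub>R sX + (inner c d / inner d d) *\<^sub>R d"
  have cPX: "inner cP sX = inner c sX" using dX ssX
    by (simp add: cP_def inner_add_left)
  have cPd: "inner cP d = inner c d" using dX dd
    by (simp add: cP_def inner_add_left inner_commute[of sX d])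
  have cPc: "inner cP cP = inner cP c"
  proof -
    have "inner cP cP = (inner c sX / inner sX sX) * inner sX cP + (inner c d / inner d d) * inner d cP"
      by (simp add: cP_def inner_add_left)
    also have "\<dots> = (inner c sX / inner sX sX) * inner c sX + (inner c d / inner d d) * inner c d"
      using cPX cPd by (simp add: inner_commute)
    also have "\<dots> = inner cP c" by (simp add: cP_def inner_add_left inner_commute[of _ c])
      (simp add: inner_add_right)
    finally show ?thesis .
  qed
  have cPspan: "cP \<in> span {sX, sY}" unfolding cP_def
    by (simp add: span_base span_add span_scale dspan)
  have "inner cP cP \<le> norm cP * norm c" using cPc norm_cauchy_schwarz by metis
  then have "norm cP ^ 2 \<le> norm cP * norm c" by (simp add: power2_norm_eq_inner)
  then have ncP: "norm cP \<le> norm c"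
    by (metis norm_ge_zero power2_eq_square mult_right_le_imp_le order.trans mult_le_cancel_left_pos
          antisym_conv2 le_less not_less zero_less_norm_iff norm_zero)
  define \<sigma> :: real where "\<sigma> = (if \<kappa> \<ge> 0 then -1 else 1)"
  define e where "e = \<sigma> *\<^sub>R d"
  define q where "q = inner e e"
  have q: "q = inner d d" using \<sigma>_def by (simp add: q_def e_def)
  define m where "m = inner cP e"
  define D where "D = m^2 + q * ((norm c)^2 - inner cP cP)"
  have Dm: "D \<ge> m^2" unfolding D_def using q dd ncP
    by (simp add: power2_norm_eq_inner[symmetric] power_mono)
  have sq: "sqrt D \<ge> \<bar>m\<bar>" using Dm real_sqrt_ge_abs1 real_sqrt_le_mono real_sqrt_abs by metis
  define lam where "lam = (- m + sqrt D) / q"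
  have lamnn: "lam \<ge> 0" unfolding lam_def using sq q dd by simp
  have D0: "D \<ge> 0" using Dm by (meson order.trans zero_le_power2)
  define c' where "c' = cP + lam *\<^sub>R e"
  have "inner c' c' = inner cP cP + 2 * lam * m + lam^2 * q"
    by (simp add: c'_def m_def q_def inner_add_left inner_add_right inner_commute power2_eq_square algebra_simps)
  also have "\<dots> = (norm c)^2"
  proof -
    have "(sqrt D)^2 = D" using D0 by simp
    then show ?thesis using q dd unfolding lam_def D_def
      by (simp add: field_simps power2_eq_square)
  qed
  finally have "norm c' = norm c" by (simp add: power2_norm_eq_inner[symmetric])
  moreover have "c' \<in> span {sX, sY}" unfolding c'_def e_def
    by (simp add: span_add span_scale cPspan dspan)
  moreover have "inner sX c' = inner sX c" using cPX dX
    by (simp add: c'_def e_def inner_add_right inner_commute)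
  moreover have "\<kappa> * (inner sY c' - inner sY c) \<le> 0"
  proof -
    have "inner sY cP = inner sY c"
      using cPX cPd by (simp add: d_def inner_diff_left inner_diff_right inner_commute algebra_simps)
    then have "inner sY c' - inner sY c = lam * \<sigma> * inner d d"
      using sYd by (simp add: c'_def e_def inner_add_right)
    then show ?thesis using lamnn dd \<sigma>_def
      by (auto simp: mult_nonneg_nonneg mult_nonpos_nonneg mult_le_0_iff)
  qed
  ultimately show ?thesis by blast
qed

lemma norm_lin_sq:
  fixes u c :: "real ^ 'd"
  shows "(norm (\<alpha> *\<^sub>R u - \<beta> *\<^sub>R c))^2 = \<alpha>^2 * inner u u - 2*\<alpha>*\<beta> * inner u c + \<beta>^2 * inner c c"
  unfolding power2_norm_eq_inner by (simp add: inner_diff_left inner_diff_right inner_commute power2_eq_square algebra_simps)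

lemma better_point:
  fixes sX sY c :: "real ^ 'd"
  assumes ind: "independent {sX, sY}" and ne: "sX \<noteq> sY"
  shows "\<exists>c'\<in>span {sX, sY}. norm c' = norm c \<and> p_fun sX z c' rX = p_fun sX z c rX \<and>
           rY_lower sX sY k0 k1 z c' b \<le> rY_lower sX sY k0 k1 z c b"
proof -
  define sc where "sc = sqrt (1 - (norm c)^2)"
  define ka where "ka = k1 - b * k0"
  obtain c' where c': "c' \<in> span {sX, sY}" "norm c' = norm c" "inner sX c' = inner sX c"
     "(z * sc * ka) * (inner sY c' - inner sY c) \<le> 0"
    using key_step[OF ind ne, of c "z * sc * ka"] by blast
  have s': "sqrt (1 - (norm c')^2) = sc" using c'(2) sc_def by simp
  have "p_fun sX z c' rX = p_fun sX z c rX"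
    unfolding p_fun_def norm_lin_sq s' using c'(2,3)
    by (simp add: sc_def power2_norm_eq_inner[symmetric])
  moreover
  have vv: "(norm (v_fun sX sY k0 k1 z c b))^2 \<le> (norm (v_fun sX sY k0 k1 z c' b))^2"
  proof -
    have e: "\<And>x::real^'d. norm x = norm c \<Longrightarrow> (norm (v_fun sX sY k0 k1 z x b))^2 =
        (z * sc)^2 * inner (sY - b *\<^sub>R sX) (sY - b *\<^sub>R sX) - 2*(z * sc)*ka*(inner sY x - b * inner sX x)
         + ka^2 * (norm c)^2"
      unfolding v_fun_def norm_lin_sq ka_def[symmetric] sc_def
      by (simp add: power2_norm_eq_inner[symmetric] inner_diff_left)
    show ?thesis unfolding e[OF refl] e[OF c'(2)] using c'(3,4) by (simp add: algebra_simps)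
  qed
  have "rY_lower sX sY k0 k1 z c' b \<le> rY_lower sX sY k0 k1 z c b"
  proof (cases "v_fun sX sY k0 k1 z c b = 0")
    case True then show ?thesis by (simp add: rY_lower_def)
  next
    case False
    then have n0: "norm (v_fun sX sY k0 k1 z c b) > 0" by simp
    have "norm (v_fun sX sY k0 k1 z c b) \<le> norm (v_fun sX sY k0 k1 z c' b)"
      using vv by (simp add: power_mono_iff[symmetric] abs_le_square_iff)
    then show ?thesis using False n0
      by (auto simp: rY_lower_def intro!: divide_left_mono mult_pos_pos)
  qed
  ultimately show ?thesis using c' by blast
qed

theorem mainTheorem16:
  fixes sX sY :: "real ^ 'd" and k0 k1 b z rX cl cu :: real
  assumes "CARD('d) \<ge> 2"
    and "independent {sX, sY}" and "sX \<noteq> sY"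
    and "k0 > 0" and "b \<noteq> k1 / k0" and "z \<noteq> 0" and "rX \<ge> 0"
    and "0 \<le> cl" and "cl \<le> cu" and "cu \<le> 1"
  shows "(INF c \<in> {c :: real ^ 'd. p_fun sX z c rX \<ge> 0 \<and> cl \<le> norm c \<and> norm c \<le> cu \<and> norm c < 1}.
            rY_lower sX sY k0 k1 z c b)
       = (INF c \<in> {c \<in> span {sX, sY}. p_fun sX z c rX \<ge> 0 \<and> cl \<le> norm c \<and> norm c \<le> cu \<and> norm c < 1}.
            rY_lower sX sY k0 k1 z c b)"
proof (rule antisym)
  show "(INF c \<in> {c :: real ^ 'd. p_fun sX z c rX \<ge> 0 \<and> cl \<le> norm c \<and> norm c \<le> cu \<and> norm c < 1}.
            rY_lower sX sY k0 k1 z c b)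
       \<le> (INF c \<in> {c \<in> span {sX, sY}. p_fun sX z c rX \<ge> 0 \<and> cl \<le> norm c \<and> norm c \<le> cu \<and> norm c < 1}.
            rY_lower sX sY k0 k1 z c b)"
    by (rule INF_superset_mono) auto
next
  show "(INF c \<in> {c \<in> span {sX, sY}. p_fun sX z c rX \<ge> 0 \<and> cl \<le> norm c \<and> norm c \<le> cu \<and> norm c < 1}.
            rY_lower sX sY k0 k1 z c b)
       \<le> (INF c \<in> {c :: real ^ 'd. p_fun sX z c rX \<ge> 0 \<and> cl \<le> norm c \<and> norm c \<le> cu \<and> norm c < 1}.
            rY_lower sX sY k0 k1 z c b)"
  proof (rule INF_mono)
    fix c assume "c \<in> {c :: real ^ 'd. p_fun sX z c rX \<ge> 0 \<and> cl \<le> norm c \<and> norm c \<le> cu \<and> norm c < 1}"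
    then show "\<exists>c'\<in>{c \<in> span {sX, sY}. p_fun sX z c rX \<ge> 0 \<and> cl \<le> norm c \<and> norm c \<le> cu \<and> norm c < 1}.
            rY_lower sX sY k0 k1 z c' b \<le> rY_lower sX sY k0 k1 z c b"
      using better_point[OF assms(2,3), of c z rX k0 k1 b] by force
  qed
qed

end
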